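(* Let $(X,Y)$ be a random variable with values in $[0,1]^2$ such that $X+Y\le 1$ almost surely, with $\mu_X=\mathbb E X$, $\mu_Y=\mathbb E Y$. Let $(X_1,Y_1),\dots,(X_n,Y_n)$ be $n$ independent copies of $(X,Y)$, and $\mathbf X=(X_1,\dots,X_n)$, $\mathbf Y=(Y_1,\dots,Y_n)$. Let $(X',Y')$ be a random variable taking the values $(1,0)$, $(0,1)$, $(0,0)$ with probabilities $\mu_X$, $\mu_Y$, $1-\mu_X-\mu_Y$ respectively, and let $\mathbf X',\mathbf Y'\in\{0,1\}^n$ be formed from $n$ independent copies of $(X',Y')$ in the same way. Then for every convex function $f:[0,1]^n\times[0,1]^n\to\mathbb R$, $$\mathbb E\big[f(\mathbf X,\mathbf Y)\big]\ \le\ \mathbb E\big[f(\mathbf X',\mathbf Y')\big].$$ *)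

theory Defs
  imports "HOL-Probability.Probability"
begin

text \<open>The domain [0,1]^n x [0,1]^n, with n = CARD('n).\<close>
definition unit_cube_pair :: "((real^'n) \<times> (real^'n)) set" where
  "unit_cube_pair = {(x, y). \<forall>i. x $ i \<in> {0..1} \<and> y $ i \<in> {0..1}}"

end

theory Submission imports Defs begin

lemma unit_ineq: "0 \<le> (u::real) \<Longrightarrow> 0 \<le> v \<Longrightarrow> u + v = 1 \<Longrightarrow> a \<in> {0..1} \<Longrightarrow> b \<in> {0..1}
   \<Longrightarrow> u * a + v * b \<in> {0..1}"
proof -
  assume h: "0 \<le> u" "0 \<le> v" "u + v = 1" "a \<in> {0..1}" "b \<in> {0..1}"
  have "u * a \<le> u" "v * b \<le> v" using h by (auto intro: mult_left_le)
  moreover have "0 \<le> u * a" "0 \<le> v * b" using h by auto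
  ultimately show ?thesis using h by auto
qed

lemma convex_cube: "convex (unit_cube_pair :: ((real^'n) \<times> (real^'n)) set)"
  unfolding convex_def unit_cube_pair_def
proof (clarsimp, intro allI conjI)
  fix a b aa ba :: "real^'n" and u v :: real and i
  assume h: "\<forall>i. 0 \<le> a $ i \<and> a $ i \<le> 1 \<and> 0 \<le> b $ i \<and> b $ i \<le> 1"
     "\<forall>i. 0 \<le> aa $ i \<and> aa $ i \<le> 1 \<and> 0 \<le> ba $ i \<and> ba $ i \<le> 1" "0 \<le> u" "0 \<le> v" "u + v = 1"
  have "u * a $ i + v * aa $ i \<in> {0..1}" "u * b $ i + v * ba $ i \<in> {0..1}"
    by (rule unit_ineq; use h in auto)+
  then show "u * a $ i + v * aa $ i \<le> 1" "u * b $ i + v * ba $ i \<le> 1" by auto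
qed

lemma jensen_prod:
  fixes f :: "(real^'n::finite) \<times> (real^'n) \<Rightarrow> real" and A :: "nat set"
    and p q :: "nat \<Rightarrow> real" and w :: "nat \<Rightarrow> real \<Rightarrow> real \<Rightarrow> real" and x y :: "real^'n"
  assumes conv: "convex_on unit_cube_pair f"
    and A: "finite A" "A \<noteq> {}"
    and pq: "\<forall>a\<in>A. p a \<in> {0..1} \<and> q a \<in> {0..1}"
    and wnn: "\<forall>i. \<forall>a\<in>A. w a (x$i) (y$i) \<ge> 0"
    and w1: "\<forall>i. (\<Sum>a\<in>A. w a (x$i) (y$i)) = 1"
    and wp: "\<forall>i. (\<Sum>a\<in>A. w a (x$i) (y$i) * p a) = x$i"
    and wq: "\<forall>i. (\<Sum>a\<in>A. w a (x$i) (y$i) * q a) = y$i"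
  shows "f (x, y) \<le> (\<Sum>v\<in>PiE UNIV (\<lambda>_. A). (\<Prod>i\<in>UNIV. w (v i) (x$i) (y$i))
              * f (\<chi> i. p (v i), \<chi> i. q (v i)))"
proof -
  define V where "V = PiE (UNIV::'n set) (\<lambda>_. A)"
  define W where "W v = (\<Prod>i\<in>UNIV. w (v i) (x$i) (y$i))" for v :: "'n \<Rightarrow> nat"
  define P where "P v = ((\<chi> i. p (v i)) :: real^'n, (\<chi> i. q (v i)) :: real^'n)" for v :: "'n \<Rightarrow> nat"
  have finV: "finite V" unfolding V_def using A by (simp add: finite_PiE)
  have neV: "V \<noteq> {}" unfolding V_def using A by (simp add: PiE_eq_empty_iff)
  have gen: "(\<Sum>v\<in>V. W v * r (v j)) = (\<Sum>a\<in>A. w a (x$j) (y$j) * r a)" for r :: "nat \<Rightarrow> real" and j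
  proof -
    have "(\<Sum>v\<in>V. W v * r (v j)) = (\<Sum>v\<in>V. \<Prod>i\<in>UNIV. w (v i) (x$i) (y$i) * (if i = j then r (v i) else 1))"
      unfolding W_def by (simp add: prod.distrib prod.delta)
    also have "\<dots> = (\<Prod>i\<in>UNIV. \<Sum>a\<in>A. w a (x$i) (y$i) * (if i = j then r a else 1))"
      unfolding V_def by (rule prod_sum_PiE[symmetric]) (use A in auto)
    also have "\<dots> = (\<Prod>i\<in>UNIV. if i = j then (\<Sum>a\<in>A. w a (x$j) (y$j) * r a) else 1)"
      by (rule prod.cong) (auto simp: w1)
    also have "\<dots> = (\<Sum>a\<in>A. w a (x$j) (y$j) * r a)" by (simp add: prod.delta)
    finally show ?thesis .
  qed
  have W1: "(\<Sum>v\<in>V. W v) = 1"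
  proof -
    have "(\<Sum>v\<in>V. W v) = (\<Sum>v\<in>V. W v * (\<lambda>_. 1) (v undefined))" by simp
    also have "\<dots> = 1" by (subst gen) (simp add: w1)
    finally show ?thesis .
  qed
  have Wnn: "W v \<ge> 0" if "v \<in> V" for v
    unfolding W_def using that wnn by (auto simp: V_def intro!: prod_nonneg)
  have PS: "P v \<in> unit_cube_pair" if "v \<in> V" for v
    using that pq by (auto simp: V_def P_def unit_cube_pair_def PiE_iff)
  have xy: "(x, y) = (\<Sum>v\<in>V. W v *\<^sub>R P v)"
  proof -
    have "x = (\<Sum>v\<in>V. W v *\<^sub>R fst (P v))"
    proof (rule vec_eq_iff[THEN iffD2], intro allI)
      fix j show "x $ j = (\<Sum>v\<in>V. W v *\<^sub>R fst (P v)) $ j"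
        using gen[of p j] wp by (simp add: P_def)
    qed
    moreover have "y = (\<Sum>v\<in>V. W v *\<^sub>R snd (P v))"
    proof (rule vec_eq_iff[THEN iffD2], intro allI)
      fix j show "y $ j = (\<Sum>v\<in>V. W v *\<^sub>R snd (P v)) $ j"
        using gen[of q j] wq by (simp add: P_def)
    qed
    ultimately show ?thesis by (simp add: fst_sum snd_sum prod_eq_iff)
  qed
  have "f (x, y) \<le> (\<Sum>v\<in>V. W v * f (P v))"
    unfolding xy by (rule convex_on_sum[OF finV neV conv W1 Wnn PS])
  then show ?thesis unfolding V_def W_def P_def .
qed

lemma unit_mult: "(a::real) \<in> {0..1} \<Longrightarrow> b \<in> {0..1} \<Longrightarrow> a * b \<in> {0..1}"
  by (auto intro: mult_le_one)

lemma unit_mult_abs: "(c::real) \<in> {0..1} \<Longrightarrow> c * d \<le> \<bar>d\<bar>"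
proof -
  assume c: "c \<in> {0..1}"
  show ?thesis
  proof (cases "d \<ge> 0")
    case True then show ?thesis using c by (simp add: mult_left_le_one_le)
  next
    case False
    have "c * d \<le> 0" using c False by (simp add: mult_nonneg_nonpos)
    then show ?thesis using False by linarith
  qed
qed

lemma f_upper:
  fixes f :: "(real^'n::finite) \<times> (real^'n) \<Rightarrow> real"
  assumes conv: "convex_on unit_cube_pair f"
  shows "\<exists>K. \<forall>z\<in>unit_cube_pair. f z \<le> K"
proof -
  define A :: "nat set" where "A = {0,1,2,3}"
  define p :: "nat \<Rightarrow> real" where "p a = (if a = 1 \<or> a = 3 then 1 else 0)" for a
  define q :: "nat \<Rightarrow> real" where "q a = (if a = 2 \<or> a = 3 then 1 else 0)" for a
  define w :: "nat \<Rightarrow> real \<Rightarrow> real \<Rightarrow> real" where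
    "w a s t = (if a = 1 \<or> a = 3 then s else 1 - s) * (if a = 2 \<or> a = 3 then t else 1 - t)" for a s t
  define V where "V = PiE (UNIV::'n set) (\<lambda>_. A)"
  define K where "K = (\<Sum>v\<in>V. \<bar>f (\<chi> i. p (v i), \<chi> i. q (v i))\<bar>)"
  have "f z \<le> K" if z: "z \<in> unit_cube_pair" for z
  proof -
    obtain x y where zxy: "z = (x, y)" by (cases z)
    have r: "\<And>i. x $ i \<in> {0..1} \<and> y $ i \<in> {0..1}" using z zxy by (auto simp: unit_cube_pair_def)
    have wr: "w a (x$i) (y$i) \<in> {0..1}" for a i
      using r[of i] unfolding w_def by (intro unit_mult) auto
    have "f (x, y) \<le> (\<Sum>v\<in>V. (\<Prod>i\<in>UNIV. w (v i) (x$i) (y$i)) * f (\<chi> i. p (v i), \<chi> i. q (v i)))"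
      unfolding V_def
    proof (rule jensen_prod[OF conv])
      show "finite A" "A \<noteq> {}" by (auto simp: A_def)
      show "\<forall>a\<in>A. p a \<in> {0..1} \<and> q a \<in> {0..1}" by (simp add: A_def p_def q_def)
      show "\<forall>i. \<forall>a\<in>A. w a (x$i) (y$i) \<ge> 0" using wr by simp
      show "\<forall>i. (\<Sum>a\<in>A. w a (x$i) (y$i)) = 1" by (simp add: A_def w_def algebra_simps)
      show "\<forall>i. (\<Sum>a\<in>A. w a (x$i) (y$i) * p a) = x$i" by (simp add: A_def w_def p_def algebra_simps)
      show "\<forall>i. (\<Sum>a\<in>A. w a (x$i) (y$i) * q a) = y$i" by (simp add: A_def w_def q_def algebra_simps)
    qed
    also have "\<dots> \<le> K" unfolding K_def
    proof (rule sum_mono)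
      fix v assume "v \<in> V"
      have "(\<Prod>i\<in>UNIV. w (v i) (x$i) (y$i)) \<in> {0..1}"
        using wr by (auto intro!: prod_nonneg prod_le_1)
      then show "(\<Prod>i\<in>UNIV. w (v i) (x$i) (y$i)) * f (\<chi> i. p (v i), \<chi> i. q (v i))
            \<le> \<bar>f (\<chi> i. p (v i), \<chi> i. q (v i))\<bar>"
        by (rule unit_mult_abs)
    qed
    finally show ?thesis using zxy by simp
  qed
  then show ?thesis by blast
qed

lemma f_abs_bound:
  fixes f :: "(real^'n::finite) \<times> (real^'n) \<Rightarrow> real"
  assumes conv: "convex_on unit_cube_pair f"
  shows "\<exists>B. \<forall>z\<in>unit_cube_pair. \<bar>f z\<bar> \<le> B"
proof -
  obtain K where K: "\<forall>z\<in>unit_cube_pair. f z \<le> K" using f_upper[OF conv] by blast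
  define c :: "(real^'n) \<times> (real^'n)" where "c = (\<chi> _. 1/2, \<chi> _. 1/2)"
  have "\<bar>f z\<bar> \<le> \<bar>K\<bar> + 2 * \<bar>f c\<bar>" if z: "z \<in> unit_cube_pair" for z
  proof -
    obtain x y where zxy: "z = (x, y)" by (cases z)
    define z' where "z' = ((\<chi> i. 1 - x $ i) :: real^'n, (\<chi> i. 1 - y $ i) :: real^'n)"
    have z': "z' \<in> unit_cube_pair" using z zxy by (auto simp: unit_cube_pair_def z'_def)
    have "c = (1 - 1/2) *\<^sub>R z + (1/2) *\<^sub>R z'"
      unfolding c_def z'_def zxy by (simp add: vec_eq_iff field_simps)
    then have "f c \<le> (1 - 1/2) * f z + (1/2) * f z'"
      using convex_onD[OF conv, of "1/2" z z'] z z' by simp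
    moreover have "f z \<le> K" "f z' \<le> K" using K z z' by auto
    moreover have "K \<le> \<bar>K\<bar>" "f c \<le> \<bar>f c\<bar>" "- f c \<le> \<bar>f c\<bar>" by auto
    ultimately show ?thesis by (simp add: abs_if; linarith)
  qed
  then show ?thesis by blast
qed
definition dd :: "real \<Rightarrow> real" where "dd t = (if 0 < t \<and> t < 1 then min t (1 - t) else 1)"

lemma coord:
  fixes t t' l r :: real
  assumes "t \<in> {0..1}" "t' \<in> {0..1}" "0 < l" "\<bar>t' - t\<bar> \<le> l * r" "0 < r" "r \<le> dd t"
  shows "t + (t' - t) / l \<in> {0..1}"
proof -
  define s where "s = (t' - t) / l"
  have sa: "\<bar>s\<bar> \<le> r" using assms unfolding s_def
    by (simp add: abs_divide divide_le_eq mult.commute)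
  have "t + s \<in> {0..1}"
  proof (cases "0 < t \<and> t < 1")
    case True
    then have "r \<le> t" "r \<le> 1 - t" using assms(6) by (auto simp: dd_def)
    then show ?thesis using sa by (simp add: abs_le_iff; linarith)
  next
    case False
    have "dd t = 1" using False unfolding dd_def by auto
    then have r1: "r \<le> 1" using assms(6) by simp
    from False assms(1) have "t = 0 \<or> t = 1" by auto
    then show ?thesis
    proof
      assume t0: "t = 0"
      have "0 \<le> s" unfolding s_def using t0 assms(2,3) by simp
      then show ?thesis using t0 sa r1 by simp
    next
      assume t1: "t = 1"
      have "s \<le> 0" unfolding s_def using t1 assms(2,3) by (simp add: divide_nonpos_pos)
      then show ?thesis using t1 sa r1 by (simp add: abs_le_iff; linarith)
    qed
  qed
  then show ?thesis unfolding s_def .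
qed

lemma usc_local:
  fixes f :: "(real^'n::finite) \<times> (real^'n) \<Rightarrow> real"
  assumes conv: "convex_on unit_cube_pair f" and z: "z \<in> unit_cube_pair" and fa: "f z < a"
  shows "\<exists>e>0. \<forall>z'\<in>unit_cube_pair. dist z' z < e \<longrightarrow> f z' < a"
proof -
  obtain K where K: "\<forall>z\<in>unit_cube_pair. f z \<le> K" using f_upper[OF conv] by blast
  obtain x y where zxy: "z = (x, y)" by (cases z)
  have xr: "x $ i \<in> {0..1}" "y $ i \<in> {0..1}" for i using z zxy by (auto simp: unit_cube_pair_def)
  define R where "R = range (\<lambda>i. dd (x$i)) \<union> range (\<lambda>i. dd (y$i))"
  define r where "r = Min R"
  have finR: "finite R" "R \<noteq> {}" unfolding R_def by auto
  have ddpos: "0 < dd t" if "t \<in> {0..1}" for t using that by (auto simp: dd_def)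
  have rpos: "0 < r" unfolding r_def using finR ddpos xr by (auto simp: R_def)
  have rx: "r \<le> dd (x$i)" "r \<le> dd (y$i)" for i unfolding r_def using finR by (auto simp: R_def)
  have Kz: "f z \<le> K" using K z by auto
  define e where "e = min r (r * (a - f z) / (K - f z + 1))"
  have epos: "0 < e" unfolding e_def using rpos fa Kz by auto
  have "f z' < a" if z': "z' \<in> unit_cube_pair" and dz: "dist z' z < e" for z'
  proof (cases "z' = z")
    case True then show ?thesis using fa by simp
  next
    case False
    obtain x' y' where zxy': "z' = (x', y')" by (cases z')
    have xr': "x' $ i \<in> {0..1}" "y' $ i \<in> {0..1}" for i using z' zxy' by (auto simp: unit_cube_pair_def)
    define l where "l = dist z' z / r"
    have lpos: "0 < l" unfolding l_def using False rpos by simp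
    have l1: "l \<le> 1" unfolding l_def using dz rpos by (simp add: e_def divide_le_eq)
    have dcx: "\<bar>x'$i - x$i\<bar> \<le> l * r" "\<bar>y'$i - y$i\<bar> \<le> l * r" for i
    proof -
      have "l * r = norm (x' - x, y' - y)" unfolding l_def using rpos zxy zxy' by (simp add: dist_norm)
      moreover have "\<bar>x'$i - x$i\<bar> \<le> norm (x' - x)" using component_le_norm_cart[of "x' - x" i] by simp
      moreover have "\<bar>y'$i - y$i\<bar> \<le> norm (y' - y)" using component_le_norm_cart[of "y' - y" i] by simp
      moreover have "norm (x' - x) \<le> norm (x' - x, y' - y)" "norm (y' - y) \<le> norm (x' - x, y' - y)"
        by (rule norm_fst_le, rule norm_snd_le)
      ultimately show "\<bar>x'$i - x$i\<bar> \<le> l * r" "\<bar>y'$i - y$i\<bar> \<le> l * r" by linarith+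
    qed
    define w where "w = ((\<chi> i. x$i + (x'$i - x$i) / l) :: real^'n, (\<chi> i. y$i + (y'$i - y$i) / l) :: real^'n)"
    have wS: "w \<in> unit_cube_pair"
      unfolding w_def unit_cube_pair_def
      using coord[OF xr(1) xr'(1) lpos dcx(1) rpos rx(1)] coord[OF xr(2) xr'(2) lpos dcx(2) rpos rx(2)]
      by auto
    have zw: "z' = (1 - l) *\<^sub>R z + l *\<^sub>R w"
      unfolding zxy zxy' w_def using lpos by (simp add: vec_eq_iff field_simps)
    have "f z' \<le> (1 - l) * f z + l * f w"
      unfolding zw by (rule convex_onD[OF conv]) (use lpos l1 z wS in auto)
    also have "\<dots> \<le> f z + l * (K - f z)"
      using K wS lpos by (simp add: algebra_simps)
    also have "\<dots> < a"
    proof -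
      have "l < (a - f z) / (K - f z + 1)"
        unfolding l_def using dz rpos Kz by (simp add: e_def divide_less_eq mult.commute)
      then have "l * (K - f z + 1) < a - f z" using Kz by (simp add: less_divide_eq)
      moreover have "l * (K - f z) \<le> l * (K - f z + 1)" using lpos by simp
      ultimately show ?thesis by linarith
    qed
    finally show ?thesis .
  qed
  then show ?thesis using epos by blast
qed

lemma f_measurable:
  fixes f :: "(real^'n::finite) \<times> (real^'n) \<Rightarrow> real"
  assumes conv: "convex_on unit_cube_pair f" and h: "h \<in> borel_measurable M"
    and hS: "\<forall>\<omega>\<in>space M. h \<omega> \<in> unit_cube_pair"
  shows "(\<lambda>\<omega>. f (h \<omega>)) \<in> borel_measurable M"
proof (subst borel_measurable_iff_less, intro allI)
  fix a
  define E where "E z = (SOME e. 0 < e \<and> (\<forall>z'\<in>unit_cube_pair. dist z' z < e \<longrightarrow> f z' < a))" for z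
  have E: "0 < E z \<and> (\<forall>z'\<in>unit_cube_pair. dist z' z < E z \<longrightarrow> f z' < a)"
    if "z \<in> unit_cube_pair" "f z < a" for z
    unfolding E_def by (rule someI_ex) (use usc_local[OF conv that] in blast)
  define U where "U = (\<Union>z\<in>{z\<in>unit_cube_pair. f z < a}. ball z (E z))"
  have "open U" unfolding U_def by auto
  then have Us: "U \<in> sets borel" by simp
  have "{\<omega> \<in> space M. f (h \<omega>) < a} = h -` U \<inter> space M"
  proof (intro equalityI subsetI)
    fix \<omega> assume "\<omega> \<in> {\<omega> \<in> space M. f (h \<omega>) < a}"
    then have w: "\<omega> \<in> space M" and fw: "f (h \<omega>) < a" by auto
    have hw: "h \<omega> \<in> unit_cube_pair" using hS w by blast
    have "0 < E (h \<omega>)" using E[OF hw fw] by simp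
    then have "h \<omega> \<in> U" unfolding U_def using hw fw by (intro UN_I[of "h \<omega>"]) auto
    then show "\<omega> \<in> h -` U \<inter> space M" using w by simp
  next
    fix \<omega> assume "\<omega> \<in> h -` U \<inter> space M"
    then have w: "\<omega> \<in> space M" "h \<omega> \<in> U" by auto
    then obtain z where "z \<in> unit_cube_pair" "f z < a" "dist (h \<omega>) z < E z"
      unfolding U_def by (auto simp: dist_commute)
    then have "f (h \<omega>) < a" using E hS w by blast
    then show "\<omega> \<in> {\<omega> \<in> space M. f (h \<omega>) < a}" using w by simp
  qed
  also have "\<dots> \<in> sets M" using measurable_sets[OF h Us] .
  finally show "{\<omega> \<in> space M. f (h \<omega>) < a} \<in> sets M" .
qed
definition wt :: "nat \<Rightarrow> real \<Rightarrow> real \<Rightarrow> real" where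
  "wt a s t = (if a = 0 then s else if a = 1 then t else 1 - s - t)"

lemma wt_meas[measurable]: "(\<lambda>p. wt a (fst p) (snd p)) \<in> borel_measurable borel"
proof -
  have "continuous_on UNIV (\<lambda>p::real\<times>real. wt a (fst p) (snd p))"
    by (cases "a = 0"; cases "a = 1") (simp_all add: wt_def continuous_intros)
  then show ?thesis by (rule borel_measurable_continuous_onI)
qed

lemma wt_bound: "s \<in> {0..1} \<Longrightarrow> t \<in> {0..1} \<Longrightarrow> \<bar>wt a s t\<bar> \<le> 2"
  unfolding wt_def by auto

lemma expect_lemma:
  fixes P :: "'c measure" and U V :: "'n::finite \<Rightarrow> 'c \<Rightarrow> real" and U0 V0 :: "'c \<Rightarrow> real"
    and c :: "('n \<Rightarrow> nat) \<Rightarrow> real" and VV :: "('n \<Rightarrow> nat) set"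
  assumes P: "prob_space P"
    and indep: "prob_space.indep_vars P (\<lambda>_. borel) (\<lambda>i \<omega>. (U i \<omega>, V i \<omega>)) UNIV"
    and distr: "\<forall>i. distr P borel (\<lambda>\<omega>. (U i \<omega>, V i \<omega>)) = distr P borel (\<lambda>\<omega>. (U0 \<omega>, V0 \<omega>))"
    and rv0: "(\<lambda>\<omega>. (U0 \<omega>, V0 \<omega>)) \<in> borel_measurable P"
    and range: "\<forall>i. \<forall>\<omega>\<in>space P. U i \<omega> \<in> {0..1} \<and> V i \<omega> \<in> {0..1}"
  shows "integrable P (\<lambda>\<omega>. \<Sum>v\<in>VV. c v * (\<Prod>i\<in>UNIV. wt (v i) (U i \<omega>) (V i \<omega>)))"
    and "(\<integral>\<omega>. (\<Sum>v\<in>VV. c v * (\<Prod>i\<in>UNIV. wt (v i) (U i \<omega>) (V i \<omega>))) \<partial>P)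
         = (\<Sum>v\<in>VV. c v * (\<Prod>i\<in>UNIV. \<integral>\<omega>. wt (v i) (U0 \<omega>) (V0 \<omega>) \<partial>P))"
proof -
  interpret prob_space P by (rule P)
  have rv: "(\<lambda>\<omega>. (U i \<omega>, V i \<omega>)) \<in> borel_measurable P" for i
    using indep unfolding indep_vars_def by auto
  have measZ: "(\<lambda>\<omega>. wt a (U i \<omega>) (V i \<omega>)) \<in> borel_measurable P" for a i
    using measurable_compose[OF rv wt_meas] by simp
  have intZ: "integrable P (\<lambda>\<omega>. wt a (U i \<omega>) (V i \<omega>))" for a i
    by (rule integrable_const_bound[where B=2]) (use range wt_bound measZ in auto)
  have indZ: "indep_vars (\<lambda>_. borel) (\<lambda>i \<omega>. wt (v i) (U i \<omega>) (V i \<omega>)) UNIV" for v :: "'n \<Rightarrow> nat"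
    using indep_vars_compose2[OF indep, of "\<lambda>i p. wt (v i) (fst p) (snd p)" "\<lambda>_. borel"] by simp
  have intP: "integrable P (\<lambda>\<omega>. \<Prod>i\<in>UNIV. wt (v i) (U i \<omega>) (V i \<omega>))" for v :: "'n \<Rightarrow> nat"
    by (rule indep_vars_integrable[OF _ indZ]) (auto intro: intZ)
  show "integrable P (\<lambda>\<omega>. \<Sum>v\<in>VV. c v * (\<Prod>i\<in>UNIV. wt (v i) (U i \<omega>) (V i \<omega>)))"
    using intP by auto
  have eqi: "(\<integral>\<omega>. wt a (U i \<omega>) (V i \<omega>) \<partial>P) = (\<integral>\<omega>. wt a (U0 \<omega>) (V0 \<omega>) \<partial>P)" for a i
  proof -
    have "(\<integral>\<omega>. wt a (U i \<omega>) (V i \<omega>) \<partial>P) = integral\<^sup>L (distr P borel (\<lambda>\<omega>. (U i \<omega>, V i \<omega>))) (\<lambda>p. wt a (fst p) (snd p))"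
      by (subst integral_distr[OF rv wt_meas]) simp
    also have "\<dots> = integral\<^sup>L (distr P borel (\<lambda>\<omega>. (U0 \<omega>, V0 \<omega>))) (\<lambda>p. wt a (fst p) (snd p))"
      using distr by simp
    also have "\<dots> = (\<integral>\<omega>. wt a (U0 \<omega>) (V0 \<omega>) \<partial>P)"
      by (subst integral_distr[OF rv0 wt_meas]) simp
    finally show ?thesis .
  qed
  have "(\<integral>\<omega>. (\<Sum>v\<in>VV. c v * (\<Prod>i\<in>UNIV. wt (v i) (U i \<omega>) (V i \<omega>))) \<partial>P)
      = (\<Sum>v\<in>VV. c v * (\<integral>\<omega>. (\<Prod>i\<in>UNIV. wt (v i) (U i \<omega>) (V i \<omega>)) \<partial>P))"
    using intP by simp
  also have "\<dots> = (\<Sum>v\<in>VV. c v * (\<Prod>i\<in>UNIV. \<integral>\<omega>. wt (v i) (U i \<omega>) (V i \<omega>) \<partial>P))"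
    by (intro sum.cong refl arg_cong2[where f="(*)"] indep_vars_lebesgue_integral[OF _ indZ]) (auto intro: intZ)
  also have "\<dots> = (\<Sum>v\<in>VV. c v * (\<Prod>i\<in>UNIV. \<integral>\<omega>. wt (v i) (U0 \<omega>) (V0 \<omega>) \<partial>P))"
    by (simp add: eqi)
  finally show "(\<integral>\<omega>. (\<Sum>v\<in>VV. c v * (\<Prod>i\<in>UNIV. wt (v i) (U i \<omega>) (V i \<omega>))) \<partial>P)
         = (\<Sum>v\<in>VV. c v * (\<Prod>i\<in>UNIV. \<integral>\<omega>. wt (v i) (U0 \<omega>) (V0 \<omega>) \<partial>P))" .
qed
definition code3 :: "real \<Rightarrow> real \<Rightarrow> nat" where
  "code3 s t = (if s = 1 then 0 else if t = 1 then 1 else 2)"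

lemma wt_vertex:
  assumes "(s, t) \<in> {(1, 0), (0, 1), (0, 0)}" "a \<in> {0, 1, 2}"
  shows "wt a s t = (if a = code3 s t then 1 else 0)"
  using assms by (auto simp: wt_def code3_def)

lemma vertex_eval:
  fixes s t :: "'n::finite \<Rightarrow> real" and c :: "('n \<Rightarrow> nat) \<Rightarrow> real"
  assumes st: "\<forall>i. (s i, t i) \<in> {(1, 0), (0, 1), (0, 0)}"
  shows "(\<Sum>v\<in>PiE UNIV (\<lambda>_. {0,1,2::nat}). c v * (\<Prod>i\<in>UNIV. wt (v i) (s i) (t i)))
         = c (\<lambda>i. code3 (s i) (t i))"
proof -
  define v0 where "v0 = (\<lambda>i. code3 (s i) (t i))"
  have v0V: "v0 \<in> PiE UNIV (\<lambda>_. {0,1,2::nat})" unfolding v0_def by (auto simp: code3_def split: if_splits)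
  have pr: "(\<Prod>i\<in>UNIV. wt (v i) (s i) (t i)) = (if v = v0 then 1 else 0)"
    if v: "v \<in> PiE UNIV (\<lambda>_. {0,1,2::nat})" for v
  proof -
    have w: "wt (v i) (s i) (t i) = (if v i = v0 i then 1 else 0)" for i
      unfolding v0_def by (rule wt_vertex) (use st v in \<open>auto simp: PiE_iff\<close>)
    show ?thesis
    proof (cases "v = v0")
      case True then show ?thesis using w by simp
    next
      case False
      then obtain j where "v j \<noteq> v0 j" by auto
      then have "wt (v j) (s j) (t j) = 0" using w by simp
      then show ?thesis using False by (auto intro!: prod_zero)
    qed
  qed
  have "(\<Sum>v\<in>PiE UNIV (\<lambda>_. {0,1,2::nat}). c v * (\<Prod>i\<in>UNIV. wt (v i) (s i) (t i)))
      = (\<Sum>v\<in>PiE UNIV (\<lambda>_. {0,1,2::nat}). (if v = v0 then c v else 0))"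
    by (intro sum.cong refl) (simp add: pr)
  also have "\<dots> = c v0" using v0V by (simp add: finite_PiE)
  finally show ?thesis unfolding v0_def .
qed
lemma vec_meas: "(\<And>i. g i \<in> borel_measurable M) \<Longrightarrow> (\<lambda>\<omega>. (\<chi> i. g i \<omega>) :: real^'n::finite) \<in> borel_measurable M"
  apply (subst borel_measurable_euclidean_space)
  apply (auto simp: Basis_vec_def inner_axis)
  done

lemma fst_meas: "(fst :: real \<times> real \<Rightarrow> real) \<in> borel_measurable borel"
  by (intro borel_measurable_continuous_onI continuous_intros)
lemma snd_meas: "(snd :: real \<times> real \<Rightarrow> real) \<in> borel_measurable borel"
  by (intro borel_measurable_continuous_onI continuous_intros)

theorem mainTheorem20:
  fixes M :: "'a measure" and N :: "'b measure"
    and X Y :: "'a \<Rightarrow> real" and Xs Ys :: "'n::finite \<Rightarrow> 'a \<Rightarrow> real"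
    and X' Y' :: "'b \<Rightarrow> real" and Xs' Ys' :: "'n \<Rightarrow> 'b \<Rightarrow> real"
    and f :: "(real^'n) \<times> (real^'n) \<Rightarrow> real"
  assumes M: "prob_space M"
    and XY_rv: "(\<lambda>\<omega>. (X \<omega>, Y \<omega>)) \<in> borel_measurable M"
    and XY_range: "\<forall>\<omega>\<in>space M. X \<omega> \<in> {0..1} \<and> Y \<omega> \<in> {0..1}"
    and XY_sum: "AE \<omega> in M. X \<omega> + Y \<omega> \<le> 1"
    and copies_range: "\<forall>i. \<forall>\<omega>\<in>space M. Xs i \<omega> \<in> {0..1} \<and> Ys i \<omega> \<in> {0..1}"
    and copies_indep: "prob_space.indep_vars M (\<lambda>_. borel) (\<lambda>i \<omega>. (Xs i \<omega>, Ys i \<omega>)) UNIV"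
    and copies_distr: "\<forall>i. distr M borel (\<lambda>\<omega>. (Xs i \<omega>, Ys i \<omega>)) = distr M borel (\<lambda>\<omega>. (X \<omega>, Y \<omega>))"
    and N: "prob_space N"
    and XY'_rv: "(\<lambda>\<omega>. (X' \<omega>, Y' \<omega>)) \<in> borel_measurable N"
    and XY'_range: "\<forall>\<omega>\<in>space N. (X' \<omega>, Y' \<omega>) \<in> {(1, 0), (0, 1), (0, 0)}"
    and XY'_10: "measure N {\<omega> \<in> space N. (X' \<omega>, Y' \<omega>) = (1, 0)} = integral\<^sup>L M X"
    and XY'_01: "measure N {\<omega> \<in> space N. (X' \<omega>, Y' \<omega>) = (0, 1)} = integral\<^sup>L M Y"
    and XY'_00: "measure N {\<omega> \<in> space N. (X' \<omega>, Y' \<omega>) = (0, 0)} = 1 - integral\<^sup>L M X - integral\<^sup>L M Y"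
    and copies'_range: "\<forall>i. \<forall>\<omega>\<in>space N. (Xs' i \<omega>, Ys' i \<omega>) \<in> {(1, 0), (0, 1), (0, 0)}"
    and copies'_indep: "prob_space.indep_vars N (\<lambda>_. borel) (\<lambda>i \<omega>. (Xs' i \<omega>, Ys' i \<omega>)) UNIV"
    and copies'_distr: "\<forall>i. distr N borel (\<lambda>\<omega>. (Xs' i \<omega>, Ys' i \<omega>)) = distr N borel (\<lambda>\<omega>. (X' \<omega>, Y' \<omega>))"
    and f_convex: "convex_on unit_cube_pair f"
  shows "(\<integral>\<omega>. f (\<chi> i. Xs i \<omega>, \<chi> i. Ys i \<omega>) \<partial>M)
           \<le> (\<integral>\<omega>. f (\<chi> i. Xs' i \<omega>, \<chi> i. Ys' i \<omega>) \<partial>N)"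
proof -
  interpret M: prob_space M by (rule M)
  interpret N: prob_space N by (rule N)
  define A3 :: "nat set" where "A3 = {0,1,2}"
  define V3 where "V3 = PiE (UNIV::'n set) (\<lambda>_. A3)"
  define p3 :: "nat \<Rightarrow> real" where "p3 a = (if a = 0 then 1 else 0)" for a
  define q3 :: "nat \<Rightarrow> real" where "q3 a = (if a = 1 then 1 else 0)" for a
  define c where "c v = f (\<chi> i. p3 (v i), \<chi> i. q3 (v i))" for v :: "'n \<Rightarrow> nat"
  define gM where "gM \<omega> = (\<Sum>v\<in>V3. c v * (\<Prod>i\<in>UNIV. wt (v i) (Xs i \<omega>) (Ys i \<omega>)))" for \<omega>
  define gN where "gN \<omega> = (\<Sum>v\<in>V3. c v * (\<Prod>i\<in>UNIV. wt (v i) (Xs' i \<omega>) (Ys' i \<omega>)))" for \<omega>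
  have rvM: "(\<lambda>\<omega>. (Xs i \<omega>, Ys i \<omega>)) \<in> borel_measurable M" for i
    using copies_indep unfolding M.indep_vars_def by auto
  have rvN: "(\<lambda>\<omega>. (Xs' i \<omega>, Ys' i \<omega>)) \<in> borel_measurable N" for i
    using copies'_indep unfolding N.indep_vars_def by auto
  have sumset: "{p \<in> space borel. fst p + snd p \<le> (1::real)} \<in> sets (borel :: (real \<times> real) measure)"
    using fst_meas snd_meas by measurable
  have AEi: "AE \<omega> in M. Xs i \<omega> + Ys i \<omega> \<le> 1" for i
  proof -
    have "AE p in distr M borel (\<lambda>\<omega>. (X \<omega>, Y \<omega>)). fst p + snd p \<le> 1"
      using XY_sum by (subst AE_distr_iff[OF XY_rv sumset]) simp
    then have "AE p in distr M borel (\<lambda>\<omega>. (Xs i \<omega>, Ys i \<omega>)). fst p + snd p \<le> 1"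
      by (simp only: copies_distr[rule_format, of i])
    then show ?thesis by (subst (asm) AE_distr_iff[OF rvM sumset]) simp
  qed
  have AEall: "AE \<omega> in M. \<forall>i\<in>UNIV. Xs i \<omega> + Ys i \<omega> \<le> 1"
    using AEi by (subst AE_finite_all) auto
  have jen: "AE \<omega> in M. f (\<chi> i. Xs i \<omega>, \<chi> i. Ys i \<omega>) \<le> gM \<omega>"
    using AEall AE_space
  proof eventually_elim
    case (elim \<omega>)
    have rg: "Xs i \<omega> \<in> {0..1}" "Ys i \<omega> \<in> {0..1}" for i using copies_range elim by auto
    have "f (\<chi> i. Xs i \<omega>, \<chi> i. Ys i \<omega>) \<le> (\<Sum>v\<in>PiE UNIV (\<lambda>_. A3).
          (\<Prod>i\<in>UNIV. wt (v i) ((\<chi> i. Xs i \<omega>)$i) ((\<chi> i. Ys i \<omega>)$i)) * f (\<chi> i. p3 (v i), \<chi> i. q3 (v i)))"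
    proof (rule jensen_prod[OF f_convex])
      show "finite A3" "A3 \<noteq> {}" by (auto simp: A3_def)
      show "\<forall>a\<in>A3. p3 a \<in> {0..1} \<and> q3 a \<in> {0..1}" by (simp add: A3_def p3_def q3_def)
      show "\<forall>i. \<forall>a\<in>A3. wt a ((\<chi> i. Xs i \<omega>)$i) ((\<chi> i. Ys i \<omega>)$i) \<ge> 0"
      proof -
        have sm: "Ys i \<omega> \<le> 1 - Xs i \<omega>" for i using elim by (auto simp: algebra_simps)
        show ?thesis using rg sm by (auto simp: A3_def wt_def)
      qed
      show "\<forall>i. (\<Sum>a\<in>A3. wt a ((\<chi> i. Xs i \<omega>)$i) ((\<chi> i. Ys i \<omega>)$i)) = 1"
        by (simp add: A3_def wt_def)
      show "\<forall>i. (\<Sum>a\<in>A3. wt a ((\<chi> i. Xs i \<omega>)$i) ((\<chi> i. Ys i \<omega>)$i) * p3 a) = (\<chi> i. Xs i \<omega>)$i"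
        by (simp add: A3_def wt_def p3_def)
      show "\<forall>i. (\<Sum>a\<in>A3. wt a ((\<chi> i. Xs i \<omega>)$i) ((\<chi> i. Ys i \<omega>)$i) * q3 a) = (\<chi> i. Ys i \<omega>)$i"
        by (simp add: A3_def wt_def q3_def)
    qed
    then show ?case unfolding gM_def V3_def c_def by (simp add: mult.commute)
  qed
  have XsM: "Xs i \<in> borel_measurable M" "Ys i \<in> borel_measurable M" for i
    using measurable_compose[OF rvM fst_meas, of i] measurable_compose[OF rvM snd_meas, of i] by simp_all
  have hM: "(\<lambda>\<omega>. (\<chi> i. Xs i \<omega>, \<chi> i. Ys i \<omega>)) \<in> borel_measurable M"
    by (intro borel_measurable_Pair vec_meas XsM)
  have hS: "\<forall>\<omega>\<in>space M. (\<chi> i. Xs i \<omega>, \<chi> i. Ys i \<omega>) \<in> unit_cube_pair"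
    using copies_range by (auto simp: unit_cube_pair_def)
  obtain B where B: "\<forall>z\<in>unit_cube_pair. \<bar>f z\<bar> \<le> B" using f_abs_bound[OF f_convex] by blast
  have intL: "integrable M (\<lambda>\<omega>. f (\<chi> i. Xs i \<omega>, \<chi> i. Ys i \<omega>))"
    by (rule M.integrable_const_bound[where B=B]) (use B hS f_measurable[OF f_convex hM hS] in auto)
  have EM: "integrable M gM" "integral\<^sup>L M gM = (\<Sum>v\<in>V3. c v * (\<Prod>i\<in>UNIV. \<integral>\<omega>. wt (v i) (X \<omega>) (Y \<omega>) \<partial>M))"
    unfolding gM_def using expect_lemma[OF M copies_indep copies_distr XY_rv copies_range] by auto
  have copies'_range2: "\<forall>i. \<forall>\<omega>\<in>space N. Xs' i \<omega> \<in> {0..1} \<and> Ys' i \<omega> \<in> {0..1}"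
  proof (intro allI ballI)
    fix i \<omega> assume "\<omega> \<in> space N"
    then have "(Xs' i \<omega>, Ys' i \<omega>) \<in> {(1, 0), (0, 1), (0, 0)}" using copies'_range by blast
    then show "Xs' i \<omega> \<in> {0..1} \<and> Ys' i \<omega> \<in> {0..1}" by auto
  qed
  have EN: "integral\<^sup>L N gN = (\<Sum>v\<in>V3. c v * (\<Prod>i\<in>UNIV. \<integral>\<omega>. wt (v i) (X' \<omega>) (Y' \<omega>) \<partial>N))"
    unfolding gN_def using expect_lemma[OF N copies'_indep copies'_distr XY'_rv copies'_range2] by auto
  \<comment> \<open>matching first moments\<close>
  have XM: "X \<in> borel_measurable M" "Y \<in> borel_measurable M"
    using measurable_compose[OF XY_rv fst_meas] measurable_compose[OF XY_rv snd_meas] by simp_all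
  have XN: "X' \<in> borel_measurable N" "Y' \<in> borel_measurable N"
    using measurable_compose[OF XY'_rv fst_meas] measurable_compose[OF XY'_rv snd_meas] by simp_all
  have intXM: "integrable M X" "integrable M Y"
    by (rule M.integrable_const_bound[where B=1]; use XY_range XM in auto)+
  have intXN: "integrable N X'" "integrable N Y'"
  proof -
    have b: "\<bar>X' \<omega>\<bar> \<le> 1 \<and> \<bar>Y' \<omega>\<bar> \<le> 1" if "\<omega> \<in> space N" for \<omega>
    proof -
      have "(X' \<omega>, Y' \<omega>) \<in> {(1, 0), (0, 1), (0, 0)}" using XY'_range that by blast
      then show ?thesis by auto
    qed
    show "integrable N X'" by (rule N.integrable_const_bound[where B=1]) (use b XN in \<open>auto intro!: AE_I2\<close>)
    show "integrable N Y'" by (rule N.integrable_const_bound[where B=1]) (use b XN in \<open>auto intro!: AE_I2\<close>)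
  qed
  have mX: "integral\<^sup>L N X' = integral\<^sup>L M X"
  proof -
    have "integral\<^sup>L N X' = integral\<^sup>L N (indicator {\<omega> \<in> space N. (X' \<omega>, Y' \<omega>) = (1, 0)})"
      by (rule Bochner_Integration.integral_cong) (use XY'_range in \<open>auto simp: indicator_def\<close>)
    also have "\<dots> = measure N {\<omega> \<in> space N. (X' \<omega>, Y' \<omega>) = (1, 0)}"
      by (simp add: Int_absorb2)
    finally show ?thesis using XY'_10 by simp
  qed
  have mY: "integral\<^sup>L N Y' = integral\<^sup>L M Y"
  proof -
    have "integral\<^sup>L N Y' = integral\<^sup>L N (indicator {\<omega> \<in> space N. (X' \<omega>, Y' \<omega>) = (0, 1)})"
      by (rule Bochner_Integration.integral_cong) (use XY'_range in \<open>auto simp: indicator_def\<close>)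
    also have "\<dots> = measure N {\<omega> \<in> space N. (X' \<omega>, Y' \<omega>) = (0, 1)}"
      by (simp add: Int_absorb2)
    finally show ?thesis using XY'_01 by simp
  qed
  have mw: "(\<integral>\<omega>. wt a (X \<omega>) (Y \<omega>) \<partial>M) = (\<integral>\<omega>. wt a (X' \<omega>) (Y' \<omega>) \<partial>N)" for a
  proof -
    have "(\<integral>\<omega>. 1 - X \<omega> - Y \<omega> \<partial>M) = 1 - integral\<^sup>L M X - integral\<^sup>L M Y"
      using intXM by (simp add: Bochner_Integration.integral_diff M.prob_space)
    moreover have "(\<integral>\<omega>. 1 - X' \<omega> - Y' \<omega> \<partial>N) = 1 - integral\<^sup>L N X' - integral\<^sup>L N Y'"
      using intXN by (simp add: Bochner_Integration.integral_diff N.prob_space)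
    ultimately show ?thesis using mX mY by (cases "a = 0"; cases "a = 1") (simp_all add: wt_def)
  qed
  have RN: "(\<integral>\<omega>. f (\<chi> i. Xs' i \<omega>, \<chi> i. Ys' i \<omega>) \<partial>N) = integral\<^sup>L N gN"
  proof (rule Bochner_Integration.integral_cong[OF refl])
    fix \<omega> assume w: "\<omega> \<in> space N"
    have st: "\<forall>i. (Xs' i \<omega>, Ys' i \<omega>) \<in> {(1, 0), (0, 1), (0, 0)}" using copies'_range w by blast
    have "gN \<omega> = c (\<lambda>i. code3 (Xs' i \<omega>) (Ys' i \<omega>))"
      unfolding gN_def V3_def A3_def by (rule vertex_eval[OF st])
    also have "\<dots> = f (\<chi> i. Xs' i \<omega>, \<chi> i. Ys' i \<omega>)"
    proof -
      have "p3 (code3 (Xs' i \<omega>) (Ys' i \<omega>)) = Xs' i \<omega>" "q3 (code3 (Xs' i \<omega>) (Ys' i \<omega>)) = Ys' i \<omega>" for i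
        using st[rule_format, of i] by (auto simp: p3_def q3_def code3_def)
      then show ?thesis unfolding c_def by simp
    qed
    finally show "f (\<chi> i. Xs' i \<omega>, \<chi> i. Ys' i \<omega>) = gN \<omega>" by simp
  qed
  have "(\<integral>\<omega>. f (\<chi> i. Xs i \<omega>, \<chi> i. Ys i \<omega>) \<partial>M) \<le> integral\<^sup>L M gM"
    by (rule integral_mono_AE[OF intL EM(1) jen])
  also have "\<dots> = integral\<^sup>L N gN" unfolding EM(2) EN by (simp add: mw)
  also have "\<dots> = (\<integral>\<omega>. f (\<chi> i. Xs' i \<omega>, \<chi> i. Ys' i \<omega>) \<partial>N)" using RN by simp
  finally show ?thesis .
qed
end
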